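(* Let $\mathcal{C}$ be a uniformly quasi-wide class of labelled graphs and let $\psi(x,y)$ be a first-order interpretation formula. Then for every $m\in\mathbb{N}$ there exists $p\in\mathbb{N}$ such that for every $H \in I_\psi(\mathcal{C})$, every independent set in the graph of the relation $\cong^{D,H}_m$ has size at most $p$.
   Context: All graphs are finite, simple, undirected and loopless; labelled graphs carry unary predicates $L_a$, $a\in Lab$, for a finite set $Lab$. $N(u)$ is the neighbourhood of $u$ and $D(u,v):=N(u)\,\Delta\,N(v)$. Differential game on a graph $H$ from tuples $\bar a=(a_1,\dots,a_k)$, $\bar b=(b_1,\dots,b_k)$: in each of $m$ rounds, with current tuples $(a_1,\dots,a_n),(b_1,\dots,b_n)$, Spoiler chooses an index $i\le n$ and a vertex $v\in D(a_i,b_i)$ and declares whether $v$ becomes $a_{n+1}$ or $b_{n+1}$ (if all $D(a_i,b_i)$ are empty, Duplicator wins); Duplicator answers with a vertex $w\in D(a_i,b_i)$ (same $i$) which becomes the other of $b_{n+1},a_{n+1}$. Duplicator wins at the end iff $a_i\mapsto b_i$ is a label-preserving isomorphism of the induced subgraphs (equalities, adjacencies and labels preserved). $u\cong^{D,H}_m v$ means Duplicator has a winning strategy in the $m$-round differential game on $H$ from $((u),(v))$. The graph of this relation has vertex set $V(H)$ and an edge between distinct $u,v$ iff $u\cong^{D,H}_m v$; an independent set in it is a set of vertices no two distinct of which are related. An interpretation formula is an FO formula $\psi(x,y)$ (over the vocabulary of labelled graphs) defining a symmetric irreflexive relation on every graph; $I_\psi(G)$ is the unlabelled graph on $V(G)$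 with edges $\{uv : G\models \psi(u,v)\}$, and $I_\psi(\mathcal{C})=\{I_\psi(G):G\in\mathcal{C}\}$. Uniformly quasi-wide: $\mathcal{C}$ is uniformly quasi-wide if for every $r\in\mathbb{N}$ there are a function $N:\mathbb{N}\to\mathbb{N}$ and a constant $s\in\mathbb{N}$ such that for every $k\in\mathbb{N}$, every $G\in\mathcal{C}$ and every $A\subseteq V(G)$ with $|A|\ge N(k)$ there is a set $S\subseteq V(G)$ with $|S|\le s$ such that $A\setminus S$ contains at least $k$ vertices with pairwise distance more than $r$ in $G\setminus S$. *)

theory Defs
  imports Main
begin

record ('v, 'l) lgraph =
  verts :: "'v set"
  adjs  :: "'v \<Rightarrow> 'v \<Rightarrow> bool"
  labs  :: "'l \<Rightarrow> 'v \<Rightarrow> bool"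

definition wf_lgraph :: "('v, 'l) lgraph \<Rightarrow> bool" where
  "wf_lgraph G \<longleftrightarrow> finite (verts G)
     \<and> (\<forall>u v. adjs G u v \<longrightarrow> u \<in> verts G \<and> v \<in> verts G)
     \<and> (\<forall>u v. adjs G u v \<longrightarrow> adjs G v u)
     \<and> (\<forall>u. \<not> adjs G u u)
     \<and> (\<forall>a u. labs G a u \<longrightarrow> u \<in> verts G)"

definition nbh :: "('v, 'l) lgraph \<Rightarrow> 'v \<Rightarrow> 'v set" where
  "nbh G u = {w \<in> verts G. adjs G u w}"

definition Dset :: "('v, 'l) lgraph \<Rightarrow> 'v \<Rightarrow> 'v \<Rightarrow> 'v set" where
  "Dset G u v = (nbh G u - nbh G v) \<union> (nbh G v - nbh G u)"

definition partial_iso :: "('v, 'l) lgraph \<Rightarrow> 'v list \<Rightarrow> 'v list \<Rightarrow> bool" where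
  "partial_iso G as bs \<longleftrightarrow> length as = length bs \<and>
     (\<forall>i < length as. \<forall>j < length as.
        (as ! i = as ! j \<longleftrightarrow> bs ! i = bs ! j) \<and>
        (adjs G (as ! i) (as ! j) \<longleftrightarrow> adjs G (bs ! i) (bs ! j))) \<and>
     (\<forall>i < length as. \<forall>a. labs G a (as ! i) \<longleftrightarrow> labs G a (bs ! i))"

text \<open>dgame G m as bs: Duplicator has a winning strategy in the m-round
differential game on G from the tuples as, bs (of equal length).\<close>

primrec dgame :: "('v, 'l) lgraph \<Rightarrow> nat \<Rightarrow> 'v list \<Rightarrow> 'v list \<Rightarrow> bool" where
  "dgame G 0 as bs = partial_iso G as bs"
| "dgame G (Suc m) as bs =
     ((\<forall>i < length as. Dset G (as ! i) (bs ! i) = {}) \<or>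
      (\<forall>i < length as. \<forall>v \<in> Dset G (as ! i) (bs ! i).
          (\<exists>w \<in> Dset G (as ! i) (bs ! i). dgame G m (as @ [v]) (bs @ [w])) \<and>
          (\<exists>w \<in> Dset G (as ! i) (bs ! i). dgame G m (as @ [w]) (bs @ [v]))))"

definition dcong :: "('v, 'l) lgraph \<Rightarrow> nat \<Rightarrow> 'v \<Rightarrow> 'v \<Rightarrow> bool" where
  "dcong H m u v \<longleftrightarrow> dgame H m [u] [v]"

definition dcong_indep :: "('v, 'l) lgraph \<Rightarrow> nat \<Rightarrow> 'v set \<Rightarrow> bool" where
  "dcong_indep H m I \<longleftrightarrow> I \<subseteq> verts H \<and>
     (\<forall>u \<in> I. \<forall>v \<in> I. u \<noteq> v \<longrightarrow> \<not> dcong H m u v)"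

datatype 'l fo =
    FEq nat nat
  | FAdj nat nat
  | FLab 'l nat
  | FNeg "'l fo"
  | FAnd "'l fo" "'l fo"
  | FEx nat "'l fo"

primrec sat :: "('v, 'l) lgraph \<Rightarrow> 'l fo \<Rightarrow> (nat \<Rightarrow> 'v) \<Rightarrow> bool" where
  "sat G (FEq x y) \<sigma> = (\<sigma> x = \<sigma> y)"
| "sat G (FAdj x y) \<sigma> = adjs G (\<sigma> x) (\<sigma> y)"
| "sat G (FLab a x) \<sigma> = labs G a (\<sigma> x)"
| "sat G (FNeg \<phi>) \<sigma> = (\<not> sat G \<phi> \<sigma>)"
| "sat G (FAnd \<phi> \<chi>) \<sigma> = (sat G \<phi> \<sigma> \<and> sat G \<chi> \<sigma>)"
| "sat G (FEx x \<phi>) \<sigma> = (\<exists>a \<in> verts G. sat G \<phi> (\<sigma>(x := a)))"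

primrec fvars :: "'l fo \<Rightarrow> nat set" where
  "fvars (FEq x y) = {x, y}"
| "fvars (FAdj x y) = {x, y}"
| "fvars (FLab a x) = {x}"
| "fvars (FNeg \<phi>) = fvars \<phi>"
| "fvars (FAnd \<phi> \<chi>) = fvars \<phi> \<union> fvars \<chi>"
| "fvars (FEx x \<phi>) = fvars \<phi> - {x}"

text \<open>Assignment x := u (variable 0), y := v (variable 1).\<close>
definition env2 :: "'v \<Rightarrow> 'v \<Rightarrow> nat \<Rightarrow> 'v" where
  "env2 u v = (\<lambda>i. if i = 0 then u else v)"

text \<open>Vertices are
natural numbers, so every finite graph is represented up to isomorphism.\<close>
definition interp_formula :: "'l fo \<Rightarrow> bool" where
  "interp_formula \<psi> \<longleftrightarrow> fvars \<psi> \<subseteq> {0, 1} \<and>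
     (\<forall>G :: (nat, 'l) lgraph. wf_lgraph G \<longrightarrow>
        (\<forall>u \<in> verts G. \<forall>v \<in> verts G.
           (sat G \<psi> (env2 u v) \<longleftrightarrow> sat G \<psi> (env2 v u)) \<and> \<not> sat G \<psi> (env2 u u)))"

definition interp :: "'l fo \<Rightarrow> ('v, 'l) lgraph \<Rightarrow> ('v, 'l) lgraph" where
  "interp \<psi> G = \<lparr> verts = verts G,
     adjs = (\<lambda>u v. u \<in> verts G \<and> v \<in> verts G \<and> sat G \<psi> (env2 u v)),
     labs = (\<lambda>_ _. False) \<rparr>"

text \<open>near G S r u v: there is a walk of length at most r from u to v in G - S
(all vertices after u avoid S; u itself is outside S wherever this is used).\<close>
primrec near :: "('v, 'l) lgraph \<Rightarrow> 'v set \<Rightarrow> nat \<Rightarrow> 'v \<Rightarrow> 'v \<Rightarrow> bool" where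
  "near G S 0 u v = (u = v)"
| "near G S (Suc r) u v =
     (near G S r u v \<or> (\<exists>w. near G S r u w \<and> w \<notin> S \<and> adjs G w v \<and> v \<notin> S))"

definition uniformly_quasi_wide :: "('v, 'l) lgraph set \<Rightarrow> bool" where
  "uniformly_quasi_wide C \<longleftrightarrow>
     (\<forall>r::nat. \<exists>N :: nat \<Rightarrow> nat. \<exists>s::nat. \<forall>k::nat. \<forall>G \<in> C. \<forall>A.
        A \<subseteq> verts G \<and> card A \<ge> N k \<longrightarrow>
        (\<exists>S. S \<subseteq> verts G \<and> card S \<le> s \<and>
           (\<exists>B. B \<subseteq> A - S \<and> finite B \<and> card B = k \<and>
              (\<forall>u \<in> B. \<forall>v \<in> B. u \<noteq> v \<longrightarrow> \<not> near G S r u v))))"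

end

theory Submission
  imports Defs
begin


lemma near_mono: "near G S r a b \<Longrightarrow> r \<le> r' \<Longrightarrow> near G S r' a b"
proof (induction r' arbitrary: r)
  case 0 then show ?case by simp
next
  case (Suc r') then show ?case
    by (cases "r = Suc r'") auto
qed

lemma near_trans: "near G S r1 a b \<Longrightarrow> near G S r2 b c \<Longrightarrow> near G S (r1 + r2) a c"
proof (induction r2 arbitrary: c)
  case 0 then show ?case by simp
next
  case (Suc r2)
  from Suc.prems(2) show ?case
  proof (simp only: near.simps, elim disjE exE conjE)
    assume "near G S r2 b c" then show ?thesis using Suc by auto
  next
    fix w assume "near G S r2 b w" "w \<notin> S" "adjs G w c" "c \<notin> S"
    then show ?thesis using Suc.IH[of w] Suc.prems(1) by auto
  qed
qed

lemma near_one: "a \<notin> S \<Longrightarrow> b \<notin> S \<Longrightarrow> adjs G a b \<Longrightarrow> near G S 1 a b"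
  by auto

lemma near_sym: assumes "wf_lgraph G" shows "near G S r a b \<Longrightarrow> a \<notin> S \<Longrightarrow> b \<notin> S \<Longrightarrow> near G S r b a"
proof (induction r arbitrary: b)
  case 0 then show ?case by simp
next
  case (Suc r)
  have "near G S r a b \<or> (\<exists>w. near G S r a w \<and> w \<notin> S \<and> adjs G w b \<and> b \<notin> S)"
    using Suc.prems(1) by simp
  then show ?case
  proof (elim disjE exE conjE)
    assume "near G S r a b" then show ?thesis using Suc by auto
  next
    fix w assume h: "near G S r a w" "w \<notin> S" "adjs G w b" "b \<notin> S"
    have "near G S r w a" using Suc.IH[OF h(1) Suc.prems(2) h(2)] .
    moreover have "adjs G b w" using h(3) assms unfolding wf_lgraph_def by blast
    hence "near G S 1 b w" using h Suc.prems by auto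
    ultimately have "near G S (1 + r) b a" using near_trans[of G S 1 b w r a] by blast
    then show ?thesis by simp
  qed
qed

lemma not_near_one: "\<not> near G S r a b \<Longrightarrow> 1 \<le> r \<Longrightarrow> a \<notin> S \<Longrightarrow> b \<notin> S \<Longrightarrow> a \<noteq> b \<and> \<not> adjs G a b"
proof -
  assume h: "\<not> near G S r a b" "1 \<le> r" "a \<notin> S" "b \<notin> S"
  have "\<not> near G S (Suc 0) a b" using h(1) h(2) near_mono[of G S "Suc 0" a b r] by auto
  then show ?thesis using h by auto
qed



datatype ('v,'l) fct = FE nat nat | FA nat nat | FL 'l nat | FS 'v nat

definition atp :: "('v,'l) lgraph \<Rightarrow> 'v set \<Rightarrow> 'v list \<Rightarrow> ('v,'l) fct set" where
  "atp G S cs = {FE i j |i j. i < length cs \<and> j < length cs \<and> cs!i = cs!j}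
     \<union> {FA i j |i j. i < length cs \<and> j < length cs \<and> adjs G (cs!i) (cs!j)}
     \<union> {FL a i |a i. i < length cs \<and> labs G a (cs!i)}
     \<union> {FS s i |s i. s \<in> S \<and> i < length cs \<and> adjs G (cs!i) s}"

lemma mem_atp:
  "FE i j \<in> atp G S cs \<longleftrightarrow> i < length cs \<and> j < length cs \<and> cs!i = cs!j"
  "FA i j \<in> atp G S cs \<longleftrightarrow> i < length cs \<and> j < length cs \<and> adjs G (cs!i) (cs!j)"
  "FL a i \<in> atp G S cs \<longleftrightarrow> i < length cs \<and> labs G a (cs!i)"
  "FS s i \<in> atp G S cs \<longleftrightarrow> s \<in> S \<and> i < length cs \<and> adjs G (cs!i) s"
  by (auto simp: atp_def)

lemma atp_len: assumes "atp G S cs = atp G S ds" shows "length cs = length ds"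
proof (rule ccontr)
  assume "length cs \<noteq> length ds"
  hence "length cs < length ds \<or> length ds < length cs" by auto
  thus False
  proof
    assume h: "length cs < length ds"
    have "FE (length cs) (length cs) \<in> atp G S ds" using h by (simp add: mem_atp)
    hence "FE (length cs) (length cs) \<in> atp G S cs" using assms by simp
    thus False by (simp add: mem_atp)
  next
    assume h: "length ds < length cs"
    have "FE (length ds) (length ds) \<in> atp G S cs" using h by (simp add: mem_atp)
    hence "FE (length ds) (length ds) \<in> atp G S ds" using assms by simp
    thus False by (simp add: mem_atp)
  qed
qed

lemma atp_eqD: assumes "atp G S cs = atp G S ds" "i < length cs" "j < length cs"
  shows "(cs!i = cs!j \<longleftrightarrow> ds!i = ds!j)" "(adjs G (cs!i) (cs!j) \<longleftrightarrow> adjs G (ds!i) (ds!j))"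
    "(labs G a (cs!i) \<longleftrightarrow> labs G a (ds!i))" "s \<in> S \<Longrightarrow> (adjs G (cs!i) s \<longleftrightarrow> adjs G (ds!i) s)"
proof -
  have l: "length cs = length ds" using atp_len[OF assms(1)] .
  show "(cs!i = cs!j \<longleftrightarrow> ds!i = ds!j)"
  proof -
    have "FE i j \<in> atp G S cs \<longleftrightarrow> FE i j \<in> atp G S ds" using assms(1) by simp
    thus ?thesis using assms(2,3) l by (simp add: mem_atp)
  qed
  show "(adjs G (cs!i) (cs!j) \<longleftrightarrow> adjs G (ds!i) (ds!j))"
  proof -
    have "FA i j \<in> atp G S cs \<longleftrightarrow> FA i j \<in> atp G S ds" using assms(1) by simp
    thus ?thesis using assms(2,3) l by (simp add: mem_atp)
  qed
  show "(labs G a (cs!i) \<longleftrightarrow> labs G a (ds!i))"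
  proof -
    have "FL a i \<in> atp G S cs \<longleftrightarrow> FL a i \<in> atp G S ds" using assms(1) by simp
    thus ?thesis using assms(2,3) l by (simp add: mem_atp)
  qed
  show "s \<in> S \<Longrightarrow> (adjs G (cs!i) s \<longleftrightarrow> adjs G (ds!i) s)"
  proof -
    assume "s \<in> S"
    have "FS s i \<in> atp G S cs \<longleftrightarrow> FS s i \<in> atp G S ds" using assms(1) by simp
    thus ?thesis using assms(2,3) l \<open>s \<in> S\<close> by (simp add: mem_atp)
  qed
qed

definition nearset :: "('v,'l) lgraph \<Rightarrow> 'v set \<Rightarrow> nat \<Rightarrow> 'v list \<Rightarrow> 'v set" where
  "nearset G S r cs = {x \<in> verts G. x \<notin> S \<and> (\<exists>c\<in>set cs. near G S r c x)}"

primrec LE :: "('v,'l) lgraph \<Rightarrow> 'v set \<Rightarrow> nat \<Rightarrow> 'v list \<Rightarrow> 'v list \<Rightarrow> bool" where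
  "LE G S 0 cs ds = (atp G S cs = atp G S ds)"
| "LE G S (Suc k) cs ds = (atp G S cs = atp G S ds \<and> LE G S k cs ds \<and>
     (\<forall>x\<in>nearset G S (2^k) cs. \<exists>y\<in>nearset G S (2^k) ds. LE G S k (cs@[x]) (ds@[y])) \<and>
     (\<forall>y\<in>nearset G S (2^k) ds. \<exists>x\<in>nearset G S (2^k) cs. LE G S k (cs@[x]) (ds@[y])))"

lemma LE_atp: "LE G S k cs ds \<Longrightarrow> atp G S cs = atp G S ds"
  by (cases k) auto

lemma LE_refl: "LE G S k cs cs"
  by (induction k arbitrary: cs) auto

lemma LE_sym: "LE G S k cs ds \<Longrightarrow> LE G S k ds cs"
  by (induction k arbitrary: cs ds) (auto, metis+)

lemma LE_trans: "LE G S k cs ds \<Longrightarrow> LE G S k ds es \<Longrightarrow> LE G S k cs es"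
proof (induction k arbitrary: cs ds es)
  case 0 then show ?case by simp
next
  case (Suc k)
  show ?case
  proof -
    have a: "atp G S cs = atp G S es" using Suc.prems by simp
    have b: "LE G S k cs es" using Suc.IH Suc.prems by (meson LE.simps(2))
    have c: "\<forall>x\<in>nearset G S (2^k) cs. \<exists>z\<in>nearset G S (2^k) es. LE G S k (cs@[x]) (es@[z])"
    proof
      fix x assume "x \<in> nearset G S (2^k) cs"
      then obtain y where y: "y \<in> nearset G S (2^k) ds" "LE G S k (cs@[x]) (ds@[y])" using Suc.prems(1) by auto
      then obtain z where z: "z \<in> nearset G S (2^k) es" "LE G S k (ds@[y]) (es@[z])" using Suc.prems(2) by auto
      show "\<exists>z\<in>nearset G S (2^k) es. LE G S k (cs@[x]) (es@[z])" using y z Suc.IH by blast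
    qed
    have d: "\<forall>z\<in>nearset G S (2^k) es. \<exists>x\<in>nearset G S (2^k) cs. LE G S k (cs@[x]) (es@[z])"
    proof
      fix z assume "z \<in> nearset G S (2^k) es"
      then obtain y where y: "y \<in> nearset G S (2^k) ds" "LE G S k (ds@[y]) (es@[z])" using Suc.prems(2) by auto
      then obtain x where x: "x \<in> nearset G S (2^k) cs" "LE G S k (cs@[x]) (ds@[y])" using Suc.prems(1) by auto
      show "\<exists>x\<in>nearset G S (2^k) cs. LE G S k (cs@[x]) (es@[z])" using y x Suc.IH by blast
    qed
    show ?thesis using a b c d by simp
  qed
qed

definition Class :: "('v,'l) lgraph \<Rightarrow> 'v set \<Rightarrow> nat \<Rightarrow> 'v list \<Rightarrow> 'v list set" where
  "Class G S k cs = {ds. LE G S k cs ds}"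

definition cls :: "('v,'l) lgraph \<Rightarrow> 'v set \<Rightarrow> nat \<Rightarrow> 'v list \<Rightarrow> ('v,'l) fct set \<times> 'v list set \<times> 'v list set set" where
  "cls G S k cs = (atp G S cs, case k of 0 \<Rightarrow> ({}, {}) | Suc k' \<Rightarrow>
      (Class G S k' cs, Class G S k' ` (\<lambda>x. cs@[x]) ` nearset G S (2^k') cs))"

lemma Class_eq: "LE G S k cs ds \<Longrightarrow> Class G S k cs = Class G S k ds"
  unfolding Class_def using LE_sym LE_trans by blast

lemma Class_eqD: "Class G S k cs = Class G S k ds \<Longrightarrow> LE G S k cs ds"
  unfolding Class_def using LE_refl by blast

lemma cls_LE: assumes "cls G S k cs = cls G S k ds" shows "LE G S k cs ds"
proof (cases k)
  case 0 then show ?thesis using assms by (simp add: cls_def)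
next
  case (Suc k')
  have a: "atp G S cs = atp G S ds" and b: "Class G S k' cs = Class G S k' ds"
    and c: "Class G S k' ` (\<lambda>x. cs@[x]) ` nearset G S (2^k') cs = Class G S k' ` (\<lambda>x. ds@[x]) ` nearset G S (2^k') ds"
    using assms Suc by (auto simp: cls_def)
  have f: "\<forall>x\<in>nearset G S (2^k') cs. \<exists>y\<in>nearset G S (2^k') ds. LE G S k' (cs@[x]) (ds@[y])"
  proof
    fix x assume "x \<in> nearset G S (2^k') cs"
    hence "Class G S k' (cs@[x]) \<in> Class G S k' ` (\<lambda>x. ds@[x]) ` nearset G S (2^k') ds" using c by blast
    then obtain y where "y \<in> nearset G S (2^k') ds" "Class G S k' (cs@[x]) = Class G S k' (ds@[y])" by auto
    thus "\<exists>y\<in>nearset G S (2^k') ds. LE G S k' (cs@[x]) (ds@[y])" using Class_eqD by blast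
  qed
  have g: "\<forall>y\<in>nearset G S (2^k') ds. \<exists>x\<in>nearset G S (2^k') cs. LE G S k' (cs@[x]) (ds@[y])"
  proof
    fix y assume "y \<in> nearset G S (2^k') ds"
    hence "Class G S k' (ds@[y]) \<in> Class G S k' ` (\<lambda>x. cs@[x]) ` nearset G S (2^k') cs" using c by blast
    then obtain x where "x \<in> nearset G S (2^k') cs" "Class G S k' (ds@[y]) = Class G S k' (cs@[x])" by auto
    thus "\<exists>x\<in>nearset G S (2^k') cs. LE G S k' (cs@[x]) (ds@[y])" using Class_eqD LE_sym by metis
  qed
  show ?thesis using a b f g Suc Class_eqD by simp
qed



definition Lst :: "('v,'l) lgraph \<Rightarrow> nat \<Rightarrow> 'v list set" where
  "Lst G n = {cs. set cs \<subseteq> verts G \<and> length cs = n}"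

lemma finite_Lst: "finite (verts G) \<Longrightarrow> finite (Lst G n)"
  unfolding Lst_def by (rule finite_lists_length_eq)

definition Uf :: "nat \<Rightarrow> 'v set \<Rightarrow> ('v,'l) fct set" where
  "Uf n S = (\<lambda>(i,j). FE i j) ` ({..<n}\<times>{..<n}) \<union> (\<lambda>(i,j). FA i j) ` ({..<n}\<times>{..<n})
     \<union> (\<lambda>(a,i). FL a i) ` (UNIV \<times> {..<n}) \<union> (\<lambda>(s,i). FS s i) ` (S \<times> {..<n})"

lemma atp_sub: "length cs = n \<Longrightarrow> atp G S cs \<subseteq> Uf n S"
  unfolding atp_def Uf_def by force

lemma finite_Uf: "finite S \<Longrightarrow> finite (Uf n S :: ('v,'l::finite) fct set)"
  unfolding Uf_def by auto

lemma card_Uf: assumes "finite S"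
  shows "card (Uf n S :: ('v,'l::finite) fct set) \<le> 2*n*n + card (UNIV::'l set)*n + card S * n"
proof -
  let ?A = "(\<lambda>(i,j). FE i j) ` ({..<n}\<times>{..<n}) :: ('v,'l) fct set"
  let ?B = "(\<lambda>(i,j). FA i j) ` ({..<n}\<times>{..<n}) :: ('v,'l) fct set"
  let ?C = "(\<lambda>(a,i). FL a i) ` (UNIV \<times> {..<n}) :: ('v,'l) fct set"
  let ?D = "(\<lambda>(s,i). FS s i) ` (S \<times> {..<n}) :: ('v,'l) fct set"
  have a: "card ?A \<le> n*n" using card_image_le[of "{..<n}\<times>{..<n}" "\<lambda>(i,j). FE i j"] by (simp add: card_cartesian_product)
  have b: "card ?B \<le> n*n" using card_image_le[of "{..<n}\<times>{..<n}" "\<lambda>(i,j). FA i j"] by (simp add: card_cartesian_product)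
  have c: "card ?C \<le> card (UNIV::'l set)*n" using card_image_le[of "(UNIV::'l set) \<times> {..<n}" "\<lambda>(a,i). FL a i"] by (simp add: card_cartesian_product)
  have d: "card ?D \<le> card S * n" using card_image_le[of "S \<times> {..<n}" "\<lambda>(s,i). FS s i"] assms by (simp add: card_cartesian_product)
  have "card (Uf n S :: ('v,'l) fct set) \<le> card ?A + card ?B + card ?C + card ?D"
    unfolding Uf_def by (rule order_trans[OF card_Un_le] add_mono order_trans[OF card_Un_le] order_refl)+
  thus ?thesis using a b c d by linarith
qed

primrec Fb :: "nat \<Rightarrow> nat \<Rightarrow> nat \<Rightarrow> nat \<Rightarrow> nat" where
  "Fb cl s 0 n = 2^(2*n*n + cl*n + s*n)"
| "Fb cl s (Suc k) n = 2^(2*n*n + cl*n + s*n) * (Fb cl s k n * 2^(Fb cl s k (Suc n)))"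

lemma card_factor: assumes "finite A" "\<And>x y. x \<in> A \<Longrightarrow> y \<in> A \<Longrightarrow> f x = f y \<Longrightarrow> h x = h y"
  shows "card (h ` A) \<le> card (f ` A)"
proof -
  let ?g = "\<lambda>z. h (SOME x. x \<in> A \<and> f x = z)"
  have "h ` A \<subseteq> ?g ` (f ` A)"
  proof
    fix w assume "w \<in> h ` A"
    then obtain x where x: "x \<in> A" "w = h x" by auto
    have "\<exists>x'. x' \<in> A \<and> f x' = f x" using x by blast
    hence "(SOME x'. x' \<in> A \<and> f x' = f x) \<in> A \<and> f (SOME x'. x' \<in> A \<and> f x' = f x) = f x" by (rule someI_ex)
    hence "?g (f x) = w" using assms(2) x by metis
    thus "w \<in> ?g ` (f ` A)" using x by blast
  qed
  hence "card (h ` A) \<le> card (?g ` (f ` A))" using assms(1) by (intro card_mono) auto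
  also have "\<dots> \<le> card (f ` A)" by (rule card_image_le) (use assms(1) in auto)
  finally show ?thesis .
qed

lemma cls_bound:
  fixes G :: "('v,'l::finite) lgraph"
  assumes fv: "finite (verts G)" and fs: "finite S" and cs: "card S \<le> s"
  shows "card (cls G S k ` Lst G n) \<le> Fb (card (UNIV::'l set)) s k n"
proof (induction k arbitrary: n)
  case 0
  have sub: "cls G S 0 ` Lst G n \<subseteq> Pow (Uf n S) \<times> {({}, {})}"
    using atp_sub by (force simp: cls_def Lst_def)
  have "card (cls G S 0 ` Lst G n) \<le> card (Pow (Uf n S :: ('v,'l) fct set) \<times> {({}::'v list set, {}::'v list set set)})"
    by (rule card_mono[OF _ sub]) (simp add: finite_Uf fs)
  also have "\<dots> = 2 ^ card (Uf n S :: ('v,'l) fct set)" by (simp add: card_cartesian_product card_Pow finite_Uf fs)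
  also have "\<dots> \<le> 2^(2*n*n + card (UNIV::'l set)*n + s*n)"
    by (rule power_increasing) (use card_Uf[OF fs, where 'l='l and n=n] cs in \<open>auto intro: order_trans add_left_mono mult_right_mono\<close>)
  finally show ?case by simp
next
  case (Suc k)
  let ?C0 = "Class G S k ` Lst G n"
  let ?C1 = "Class G S k ` Lst G (Suc n)"
  have sub: "cls G S (Suc k) ` Lst G n \<subseteq> Pow (Uf n S) \<times> (?C0 \<times> Pow ?C1)"
  proof
    fix z assume "z \<in> cls G S (Suc k) ` Lst G n"
    then obtain cs where c: "cs \<in> Lst G n" "z = cls G S (Suc k) cs" by auto
    have "(\<lambda>x. cs@[x]) ` nearset G S (2^k) cs \<subseteq> Lst G (Suc n)"
      using c(1) by (auto simp: Lst_def nearset_def)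
    thus "z \<in> Pow (Uf n S) \<times> (?C0 \<times> Pow ?C1)"
      using c atp_sub[of cs n G S] by (auto simp: cls_def Lst_def)
  qed
  have fin: "finite (Lst G n)" "finite (Lst G (Suc n))" using finite_Lst[OF fv] by auto
  have c0: "card ?C0 \<le> Fb (card (UNIV::'l set)) s k n"
    using card_factor[OF fin(1), of "cls G S k" "Class G S k"] Suc.IH[of n] cls_LE Class_eq by (meson order_trans)
  have c1: "card ?C1 \<le> Fb (card (UNIV::'l set)) s k (Suc n)"
    using card_factor[OF fin(2), of "cls G S k" "Class G S k"] Suc.IH[of "Suc n"] cls_LE Class_eq by (meson order_trans)
  have "card (cls G S (Suc k) ` Lst G n) \<le> card (Pow (Uf n S :: ('v,'l) fct set) \<times> (?C0 \<times> Pow ?C1))"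
    by (rule card_mono[OF _ sub]) (simp add: finite_Uf fs fin)
  also have "\<dots> = 2 ^ card (Uf n S :: ('v,'l) fct set) * (card ?C0 * 2 ^ card ?C1)"
    using fin by (simp add: card_cartesian_product card_Pow finite_Uf fs)
  also have "\<dots> \<le> 2^(2*n*n + card (UNIV::'l set)*n + s*n) * (Fb (card (UNIV::'l set)) s k n * 2^(Fb (card (UNIV::'l set)) s k (Suc n)))"
  proof (intro mult_le_mono power_increasing c0)
    show "card (Uf n S :: ('v,'l) fct set) \<le> 2*n*n + card (UNIV::'l set)*n + s*n"
      using card_Uf[OF fs, where 'l='l and n=n] cs by (auto intro: order_trans add_left_mono mult_right_mono)
  qed (use c1 in auto)
  finally show ?case by simp
qed



definition piso :: "('v,'l) lgraph \<Rightarrow> ('v\<times>'v) set \<Rightarrow> bool" where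
  "piso G R \<longleftrightarrow> (\<forall>(a,b)\<in>R. a \<in> verts G \<and> b \<in> verts G \<and> (\<forall>l. labs G l a \<longleftrightarrow> labs G l b) \<and>
      (\<forall>(c,d)\<in>R. (a = c \<longleftrightarrow> b = d) \<and> (adjs G a c \<longleftrightarrow> adjs G b d)))"

primrec swapwin :: "('v,'l) lgraph \<Rightarrow> nat \<Rightarrow> ('v\<times>'v) set \<Rightarrow> bool" where
  "swapwin G 0 R = piso G (R \<union> R\<inverse>)"
| "swapwin G (Suc k) R = (piso G (R \<union> R\<inverse>) \<and> (\<forall>x\<in>verts G. \<exists>y\<in>verts G. swapwin G k (insert (x,y) R)))"

lemma pisoD: assumes "piso G Q" "(a,b) \<in> Q" "(c,d) \<in> Q"
  shows "a \<in> verts G" "b \<in> verts G" "labs G l a \<longleftrightarrow> labs G l b" "a = c \<longleftrightarrow> b = d" "adjs G a c \<longleftrightarrow> adjs G b d"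
  using assms unfolding piso_def by fast+

lemma swapwin_piso: "swapwin G k R \<Longrightarrow> piso G (R \<union> R\<inverse>)"
  by (cases k) auto

primrec qd :: "'l fo \<Rightarrow> nat" where
  "qd (FEq x y) = 0"
| "qd (FAdj x y) = 0"
| "qd (FLab a x) = 0"
| "qd (FNeg \<phi>) = qd \<phi>"
| "qd (FAnd \<phi> \<chi>) = max (qd \<phi>) (qd \<chi>)"
| "qd (FEx x \<phi>) = Suc (qd \<phi>)"

lemma transfer:
  "swapwin G k R \<Longrightarrow> qd \<phi> \<le> k \<Longrightarrow> (\<forall>z\<in>fvars \<phi>. (\<sigma> z, \<tau> z) \<in> R \<union> R\<inverse>) \<Longrightarrow> sat G \<phi> \<sigma> = sat G \<phi> \<tau>"
proof (induction \<phi> arbitrary: k R \<sigma> \<tau>)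
  case (FEq x y)
  have p: "piso G (R \<union> R\<inverse>)" using swapwin_piso[OF FEq.prems(1)] .
  have "(\<sigma> x, \<tau> x) \<in> R \<union> R\<inverse>" "(\<sigma> y, \<tau> y) \<in> R \<union> R\<inverse>" using FEq.prems(3) by auto
  then show ?case using pisoD[OF p] by simp
next
  case (FAdj x y)
  have p: "piso G (R \<union> R\<inverse>)" using swapwin_piso[OF FAdj.prems(1)] .
  have "(\<sigma> x, \<tau> x) \<in> R \<union> R\<inverse>" "(\<sigma> y, \<tau> y) \<in> R \<union> R\<inverse>" using FAdj.prems(3) by auto
  then show ?case using pisoD[OF p] by simp
next
  case (FLab a x)
  have p: "piso G (R \<union> R\<inverse>)" using swapwin_piso[OF FLab.prems(1)] .
  have "(\<sigma> x, \<tau> x) \<in> R \<union> R\<inverse>" using FLab.prems(3) by auto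
  then show ?case using pisoD[OF p] by simp
next
  case (FNeg \<phi>)
  then show ?case by simp
next
  case (FAnd \<phi> \<chi>)
  have "sat G \<phi> \<sigma> = sat G \<phi> \<tau>" using FAnd.IH(1)[OF FAnd.prems(1)] FAnd.prems(2,3) by simp
  moreover have "sat G \<chi> \<sigma> = sat G \<chi> \<tau>" using FAnd.IH(2)[OF FAnd.prems(1)] FAnd.prems(2,3) by simp
  ultimately show ?case by simp
next
  case (FEx x \<phi>)
  obtain k' where k: "k = Suc k'" using FEx.prems(2) by (cases k) auto
  have sw: "\<forall>a\<in>verts G. \<exists>b\<in>verts G. swapwin G k' (insert (a,b) R)" using FEx.prems(1) k by simp
  have q: "qd \<phi> \<le> k'" using FEx.prems(2) k by simp
  show ?case
  proof
    assume "sat G (FEx x \<phi>) \<sigma>"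
    then obtain a where a: "a \<in> verts G" "sat G \<phi> (\<sigma>(x:=a))" by auto
    obtain b where b: "b \<in> verts G" "swapwin G k' (insert (a,b) R)" using sw a(1) by blast
    have "\<forall>z\<in>fvars \<phi>. ((\<sigma>(x:=a)) z, (\<tau>(x:=b)) z) \<in> insert (a,b) R \<union> (insert (a,b) R)\<inverse>"
      using FEx.prems(3) by auto
    hence "sat G \<phi> (\<sigma>(x:=a)) = sat G \<phi> (\<tau>(x:=b))" using FEx.IH[OF b(2) q] by blast
    thus "sat G (FEx x \<phi>) \<tau>" using a b by auto
  next
    assume "sat G (FEx x \<phi>) \<tau>"
    then obtain b where b: "b \<in> verts G" "sat G \<phi> (\<tau>(x:=b))" by auto
    obtain a where a: "a \<in> verts G" "swapwin G k' (insert (b,a) R)" using sw b(1) by blast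
    have "\<forall>z\<in>fvars \<phi>. ((\<sigma>(x:=a)) z, (\<tau>(x:=b)) z) \<in> insert (b,a) R \<union> (insert (b,a) R)\<inverse>"
      using FEx.prems(3) by auto
    hence "sat G \<phi> (\<sigma>(x:=a)) = sat G \<phi> (\<tau>(x:=b))" using FEx.IH[OF a(2) q] by blast
    thus "sat G (FEx x \<phi>) \<sigma>" using a b by auto
  qed
qed

lemma env2_pairs: "fvars \<psi> \<subseteq> {0,1} \<Longrightarrow> (a,a') \<in> Q \<Longrightarrow> (b,b') \<in> Q \<Longrightarrow>
   \<forall>z\<in>fvars \<psi>. (env2 a b z, env2 a' b' z) \<in> Q"
  unfolding env2_def by auto

lemma gameB:
  assumes fv: "fvars \<psi> \<subseteq> {0,1}" and qq: "qd \<psi> \<le> q"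
  shows "swapwin G (q + m) R \<Longrightarrow> length as = length bs \<Longrightarrow>
    (\<forall>i<length as. (as!i, bs!i) \<in> R \<union> R\<inverse>) \<Longrightarrow> dgame (interp \<psi> G) m as bs"
proof (induction m arbitrary: R as bs)
  case 0
  have p: "piso G (R \<union> R\<inverse>)" using swapwin_piso[OF "0.prems"(1)] .
  have tr: "sat G \<psi> (env2 (as!i) (as!j)) = sat G \<psi> (env2 (bs!i) (bs!j))" if "i < length as" "j < length as" for i j
  proof -
    have "(as!i, bs!i) \<in> R \<union> R\<inverse>" "(as!j, bs!j) \<in> R \<union> R\<inverse>" using "0.prems"(3) that by auto
    from env2_pairs[OF fv this] show ?thesis using transfer[OF "0.prems"(1), of \<psi>] qq by simp
  qed
  have vv: "as!i \<in> verts G \<and> bs!i \<in> verts G" if "i < length as" for i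
    using pisoD(1,2)[OF p] "0.prems"(3) that by blast
  have eq: "(as!i = as!j) = (bs!i = bs!j)" if "i < length as" "j < length as" for i j
  proof -
    have "(as!i, bs!i) \<in> R \<union> R\<inverse>" "(as!j, bs!j) \<in> R \<union> R\<inverse>" using "0.prems"(3) that by auto
    thus ?thesis using pisoD(4)[OF p] by blast
  qed
  show ?case using "0.prems"(2) tr vv eq by (auto simp: partial_iso_def interp_def)
next
  case (Suc m)
  have sw: "\<forall>x\<in>verts G. \<exists>y\<in>verts G. swapwin G (q + m) (insert (x,y) R)" using Suc.prems(1) by simp
  have p: "piso G (R \<union> R\<inverse>)" using swapwin_piso[OF Suc.prems(1)] .
  let ?H = "interp \<psi> G"
  let ?P = "\<lambda>a b. sat G \<psi> (env2 a b)"
  have Dchar: "Dset ?H a b = {w \<in> verts G. ?P a w \<noteq> ?P b w}" if "a \<in> verts G" "b \<in> verts G" for a b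
    using that by (auto simp: Dset_def nbh_def interp_def)
  have key: "\<exists>w\<in>Dset ?H (as!i) (bs!i). swapwin G (q + m) (insert (v,w) R)"
    if i: "i < length as" and v: "v \<in> Dset ?H (as!i) (bs!i)" for i v
  proof -
    have pi: "(as!i, bs!i) \<in> R \<union> R\<inverse>" using Suc.prems(3) i by auto
    hence ab: "as!i \<in> verts G" "bs!i \<in> verts G" using pisoD(1,2)[OF p] by blast+
    have vV: "v \<in> verts G" "?P (as!i) v \<noteq> ?P (bs!i) v" using v Dchar[OF ab] by auto
    obtain w where w: "w \<in> verts G" "swapwin G (q + m) (insert (v,w) R)" using sw vV(1) by blast
    let ?R' = "insert (v,w) R"
    have p1: "(as!i, bs!i) \<in> ?R' \<union> ?R'\<inverse>" "(bs!i, as!i) \<in> ?R' \<union> ?R'\<inverse>" "(v, w) \<in> ?R' \<union> ?R'\<inverse>"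
      using pi by auto
    have "?P (as!i) v = ?P (bs!i) w"
      using transfer[OF w(2), of \<psi>] qq env2_pairs[OF fv p1(1) p1(3)] by simp
    moreover have "?P (bs!i) v = ?P (as!i) w"
      using transfer[OF w(2), of \<psi>] qq env2_pairs[OF fv p1(2) p1(3)] by simp
    ultimately have "w \<in> Dset ?H (as!i) (bs!i)" using Dchar[OF ab] w(1) vV(2) by auto
    thus ?thesis using w by blast
  qed
  have "\<forall>i<length as. \<forall>v\<in>Dset ?H (as!i) (bs!i).
          (\<exists>w\<in>Dset ?H (as!i) (bs!i). dgame ?H m (as @ [v]) (bs @ [w])) \<and>
          (\<exists>w\<in>Dset ?H (as!i) (bs!i). dgame ?H m (as @ [w]) (bs @ [v]))"
  proof (intro allI impI ballI conjI)
    fix i v assume i: "i < length as" and v: "v \<in> Dset ?H (as!i) (bs!i)"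
    obtain w where w: "w \<in> Dset ?H (as!i) (bs!i)" "swapwin G (q + m) (insert (v,w) R)" using key[OF i v] by blast
    have "\<forall>j<length (as@[v]). ((as@[v])!j, (bs@[w])!j) \<in> insert (v,w) R \<union> (insert (v,w) R)\<inverse>"
      using Suc.prems(2,3) by (auto simp: nth_append less_Suc_eq)
    hence "dgame ?H m (as @ [v]) (bs @ [w])" using Suc.IH[OF w(2)] Suc.prems(2) by simp
    thus "\<exists>w\<in>Dset ?H (as!i) (bs!i). dgame ?H m (as @ [v]) (bs @ [w])" using w(1) by blast
    have "\<forall>j<length (as@[w]). ((as@[w])!j, (bs@[v])!j) \<in> insert (v,w) R \<union> (insert (v,w) R)\<inverse>"
      using Suc.prems(2,3) by (auto simp: nth_append less_Suc_eq)
    hence "dgame ?H m (as @ [w]) (bs @ [v])" using Suc.IH[OF w(2)] Suc.prems(2) by simp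
    thus "\<exists>w\<in>Dset ?H (as!i) (bs!i). dgame ?H m (as @ [w]) (bs @ [v])" using w(1) by blast
  qed
  then show ?case by simp
qed



definition Inv :: "('v,'l) lgraph \<Rightarrow> 'v set \<Rightarrow> nat \<Rightarrow> ('v\<times>'v) set \<Rightarrow> bool" where
  "Inv G S k R \<longleftrightarrow> (\<exists>cs ds E. length cs = length ds \<and> LE G S k cs ds \<and>
     set cs \<subseteq> verts G - S \<and> set ds \<subseteq> verts G - S \<and> E \<subseteq> verts G \<and>
     (\<forall>c\<in>set cs. \<forall>d\<in>set ds. \<not> near G S (2^(k+2)) c d) \<and>
     (\<forall>e\<in>E. e \<in> S \<or> (\<forall>c\<in>set cs \<union> set ds. \<not> near G S (2^k) c e)) \<and>
     (\<forall>(a,b)\<in>R. (a,b) \<in> set (zip cs ds) \<or> (b,a) \<in> set (zip cs ds) \<or> (a = b \<and> a \<in> E)))"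

lemma wf_sym: "wf_lgraph G \<Longrightarrow> adjs G a b \<Longrightarrow> adjs G b a"
  unfolding wf_lgraph_def by blast

lemma piso_mono: "piso G Q \<Longrightarrow> Q' \<subseteq> Q \<Longrightarrow> piso G Q'"
  unfolding piso_def by (simp add: Ball_def subset_iff split_def) fast

lemma Inv_piso:
  assumes wf: "wf_lgraph G" and inv: "Inv G S k R"
  shows "piso G (R \<union> R\<inverse>)"
proof -
  obtain cs ds E where l: "length cs = length ds" and le: "LE G S k cs ds"
    and scs: "set cs \<subseteq> verts G - S" and sds: "set ds \<subseteq> verts G - S" and sE: "E \<subseteq> verts G"
    and sep: "\<forall>c\<in>set cs. \<forall>d\<in>set ds. \<not> near G S (2^(k+2)) c d"
    and Ef: "\<forall>e\<in>E. e \<in> S \<or> (\<forall>c\<in>set cs \<union> set ds. \<not> near G S (2^k) c e)"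
    and R: "\<forall>(a,b)\<in>R. (a,b) \<in> set (zip cs ds) \<or> (b,a) \<in> set (zip cs ds) \<or> (a = b \<and> a \<in> E)"
    using inv unfolding Inv_def by (elim exE conjE) (rule that, assumption+)
  have at: "atp G S cs = atp G S ds" using LE_atp[OF le] .
  define n where "n = length cs"
  have csV: "cs!i \<in> verts G" "cs!i \<notin> S" "ds!i \<in> verts G" "ds!i \<notin> S" if "i < n" for i
    using that scs sds l nth_mem unfolding n_def by (metis DiffE subsetD)+
  define K where "K = {(cs!i, ds!i) |i. i < n} \<union> {(ds!i, cs!i) |i. i < n} \<union> {(e,e) |e. e \<in> E}"
  have RK: "R \<union> R\<inverse> \<subseteq> K"
  proof
    fix p assume "p \<in> R \<union> R\<inverse>"
    then obtain a b where p: "p = (a,b)" "(a,b) \<in> R \<or> (b,a) \<in> R" by (cases p) auto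
    hence "(a,b) \<in> set (zip cs ds) \<or> (b,a) \<in> set (zip cs ds) \<or> (a = b \<and> a \<in> E)" using R by auto
    thus "p \<in> K" unfolding K_def p(1) n_def using l by (auto simp: set_zip)
  qed
  have F1: "(cs!i = cs!j \<longleftrightarrow> ds!i = ds!j) \<and> (adjs G (cs!i) (cs!j) \<longleftrightarrow> adjs G (ds!i) (ds!j))
     \<and> (labs G a (cs!i) \<longleftrightarrow> labs G a (ds!i))" if "i < n" "j < n" for i j a
    using atp_eqD[OF at, of i j] that unfolding n_def by blast
  have one: "1 \<le> (2::nat)^(k+2)" by simp
  have F2: "cs!i \<noteq> ds!j \<and> \<not> adjs G (cs!i) (ds!j) \<and> \<not> adjs G (ds!j) (cs!i)" if "i < n" "j < n" for i j
  proof -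
    have "\<not> near G S (2^(k+2)) (cs!i) (ds!j)" using sep that l unfolding n_def by (metis nth_mem)
    from not_near_one[OF this one csV(2)[OF that(1)] csV(4)[OF that(2)]] show ?thesis using wf_sym[OF wf] by blast
  qed
  have F3: "cs!i \<noteq> e \<and> ds!i \<noteq> e \<and> (adjs G (cs!i) e \<longleftrightarrow> adjs G (ds!i) e) \<and> (adjs G e (cs!i) \<longleftrightarrow> adjs G e (ds!i))"
    if "i < n" "e \<in> E" for i e
  proof (cases "e \<in> S")
    case True
    have "adjs G (cs!i) e \<longleftrightarrow> adjs G (ds!i) e" using atp_eqD(4)[OF at, of i i e] True that unfolding n_def by blast
    then show ?thesis using True csV[OF that(1)] wf_sym[OF wf] by blast
  next
    case False
    have one': "1 \<le> (2::nat)^k" by simp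
    have "cs!i \<in> set cs" "ds!i \<in> set ds" using that l unfolding n_def by auto
    hence "\<not> near G S (2^k) (cs!i) e" "\<not> near G S (2^k) (ds!i) e" using Ef that False by auto
    from not_near_one[OF this(1) one' csV(2)[OF that(1)] False] not_near_one[OF this(2) one' csV(4)[OF that(1)] False]
    show ?thesis using wf_sym[OF wf] by blast
  qed
  have EV: "e \<in> verts G" if "e \<in> E" for e using sE that by auto
  have F2': "ds!j \<noteq> cs!i" if "i < n" "j < n" for i j using F2[OF that] by metis
  have F3': "e \<noteq> cs!i \<and> e \<noteq> ds!i" if "i < n" "e \<in> E" for i e using F3[OF that] by metis
  have pK: "piso G K"
    unfolding piso_def
  proof (intro ballI, clarify)
    fix a b assume ab: "(a,b) \<in> K"
    have X: "(a = c) = (b = d) \<and> adjs G a c = adjs G b d" if cd: "(c,d) \<in> K" for c d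
        using ab cd unfolding K_def
        by (elim UnE CollectE exE conjE; simp only: prod.inject;
            (simp add: F1 F2 F3 F2' F3' ; fail)?)
    have Y: "a \<in> verts G \<and> b \<in> verts G \<and> (\<forall>l. labs G l a = labs G l b)"
      using ab csV EV F1 by (auto simp: K_def)
    show "a \<in> verts G \<and> b \<in> verts G \<and> (\<forall>l. labs G l a = labs G l b) \<and>
       (\<forall>(c,d)\<in>K. (a = c) = (b = d) \<and> adjs G a c = adjs G b d)" using X Y by blast
  qed
  show ?thesis using piso_mono[OF pK RK] .
qed



lemma pow_arith: "(2::nat)^k + 2^(k+2) + 2^k \<le> 2^(Suc k + 2)" "(2::nat)^(k+2) \<le> 2^(Suc k + 2)"
  "(2::nat)^k + 2^k = 2^(Suc k)" "(2::nat)^k \<le> 2^(Suc k)"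
  by (simp_all add: power_add)

lemma sep_new:
  assumes wf: "wf_lgraph G"
    and sep: "\<forall>c\<in>set cs. \<forall>d\<in>set ds. \<not> near G S (2^(Suc k + 2)) c d"
    and scs: "set cs \<subseteq> verts G - S" and sds: "set ds \<subseteq> verts G - S"
    and c1: "c1 \<notin> S" and d1: "d1 \<notin> S"
    and c0: "c0 \<in> set cs" "near G S (2^k) c0 c1"
    and d0: "d0 \<in> set ds" "near G S (2^k) d0 d1"
  shows "\<forall>c\<in>set (cs@[c1]). \<forall>d\<in>set (ds@[d1]). \<not> near G S (2^(k+2)) c d"
proof (intro ballI notI)
  fix c d assume c: "c \<in> set (cs@[c1])" and d: "d \<in> set (ds@[d1])" and n: "near G S (2^(k+2)) c d"
  obtain c' where c': "c' \<in> set cs" "near G S (2^k) c' c"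
  proof (cases "c \<in> set cs")
    case True
    have "near G S 0 c c" by simp
    hence "near G S (2^k) c c" using near_mono[of G S 0 c c "2^k"] by simp
    then show ?thesis using that True by blast
  next
    case False
    hence "c = c1" using c by auto
    then show ?thesis using that c0 by blast
  qed
  obtain d' where d': "d' \<in> set ds" "near G S (2^k) d d'"
  proof (cases "d \<in> set ds")
    case True
    have "near G S 0 d d" by simp
    hence "near G S (2^k) d d" using near_mono[of G S 0 d d "2^k"] by simp
    then show ?thesis using that True by blast
  next
    case False
    hence dd: "d = d1" using d by auto
    have "d0 \<notin> S" using d0(1) sds by auto
    hence "near G S (2^k) d1 d0" using near_sym[OF wf d0(2) _ d1] by blast
    then show ?thesis using that d0 dd by blast
  qed
  have "near G S (2^k + 2^(k+2) + 2^k) c' d'"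
    using near_trans[OF near_trans[OF c'(2) n] d'(2)] .
  hence "near G S (2^(Suc k + 2)) c' d'" by (rule near_mono) (rule pow_arith(1))
  thus False using sep c'(1) d'(1) by blast
qed

lemma E_new:
  assumes Ef: "\<forall>e\<in>E. e \<in> S \<or> (\<forall>c\<in>set cs \<union> set ds. \<not> near G S (2^(Suc k)) c e)"
    and c0: "c0 \<in> set cs" "near G S (2^k) c0 c1"
    and d0: "d0 \<in> set ds" "near G S (2^k) d0 d1"
  shows "\<forall>e\<in>E. e \<in> S \<or> (\<forall>c\<in>set (cs@[c1]) \<union> set (ds@[d1]). \<not> near G S (2^k) c e)"
proof (intro ballI)
  fix e assume e: "e \<in> E"
  show "e \<in> S \<or> (\<forall>c\<in>set (cs@[c1]) \<union> set (ds@[d1]). \<not> near G S (2^k) c e)"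
  proof (cases "e \<in> S")
    case False
    have old: "\<forall>c\<in>set cs \<union> set ds. \<not> near G S (2^(Suc k)) c e" using Ef e False by blast
    have "\<not> near G S (2^k) c e" if c: "c \<in> set (cs@[c1]) \<union> set (ds@[d1])" for c
    proof
      assume n: "near G S (2^k) c e"
      consider "c \<in> set cs \<union> set ds" | "c = c1" | "c = d1" using c by auto
      thus False
      proof cases
        case 1 thus False using old near_mono[OF n pow_arith(4)] by blast
      next
        case 2
        have "near G S (2^k + 2^k) c0 e" using near_trans[OF c0(2)] n 2 by blast
        thus False using old c0(1) pow_arith(3) by auto
      next
        case 3
        have "near G S (2^k + 2^k) d0 e" using near_trans[OF d0(2)] n 3 by blast
        thus False using old d0(1) pow_arith(3) by auto
      qed
    qed
    thus ?thesis by blast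
  qed simp
qed

lemma Inv_step:
  assumes wf: "wf_lgraph G" and inv: "Inv G S (Suc k) R" and x: "x \<in> verts G"
  shows "\<exists>y\<in>verts G. Inv G S k (insert (x,y) R)"
proof -
  obtain cs ds E where l: "length cs = length ds" and le: "LE G S (Suc k) cs ds"
    and scs: "set cs \<subseteq> verts G - S" and sds: "set ds \<subseteq> verts G - S" and sE: "E \<subseteq> verts G"
    and sep: "\<forall>c\<in>set cs. \<forall>d\<in>set ds. \<not> near G S (2^(Suc k+2)) c d"
    and Ef: "\<forall>e\<in>E. e \<in> S \<or> (\<forall>c\<in>set cs \<union> set ds. \<not> near G S (2^(Suc k)) c e)"
    and R: "\<forall>(a,b)\<in>R. (a,b) \<in> set (zip cs ds) \<or> (b,a) \<in> set (zip cs ds) \<or> (a = b \<and> a \<in> E)"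
    using inv unfolding Inv_def by (elim exE conjE) (rule that, assumption+)
  have sepk: "\<forall>c\<in>set cs. \<forall>d\<in>set ds. \<not> near G S (2^(k+2)) c d"
    using sep near_mono[OF _ pow_arith(2), of G S] by blast
  have fw: "\<forall>x\<in>nearset G S (2^k) cs. \<exists>y\<in>nearset G S (2^k) ds. LE G S k (cs@[x]) (ds@[y])"
    and bw: "\<forall>y\<in>nearset G S (2^k) ds. \<exists>x\<in>nearset G S (2^k) cs. LE G S k (cs@[x]) (ds@[y])"
    and lek: "LE G S k cs ds" using le by auto
  have zipapp: "set (zip (cs@[a]) (ds@[b])) = insert (a,b) (set (zip cs ds))" for a b
    using l by simp
  show ?thesis
  proof (cases "x \<notin> S \<and> (\<exists>c\<in>set cs. near G S (2^k) c x)")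
    case True
    then obtain c0 where c0: "c0 \<in> set cs" "near G S (2^k) c0 x" by blast
    have "x \<in> nearset G S (2^k) cs" using True x by (auto simp: nearset_def)
    then obtain y where y: "y \<in> nearset G S (2^k) ds" "LE G S k (cs@[x]) (ds@[y])" using fw by blast
    then obtain d0 where d0: "d0 \<in> set ds" "near G S (2^k) d0 y" "y \<in> verts G" "y \<notin> S" by (auto simp: nearset_def)
    have "Inv G S k (insert (x,y) R)" unfolding Inv_def
    proof (intro exI conjI)
      show "length (cs@[x]) = length (ds@[y])" using l by simp
      show "LE G S k (cs@[x]) (ds@[y])" using y(2) .
      show "set (cs@[x]) \<subseteq> verts G - S" using scs x True by auto
      show "set (ds@[y]) \<subseteq> verts G - S" using sds d0 by auto
      show "E \<subseteq> verts G" using sE .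
      show "\<forall>c\<in>set (cs@[x]). \<forall>d\<in>set (ds@[y]). \<not> near G S (2^(k+2)) c d"
        using sep_new[OF wf sep scs sds _ d0(4) c0 d0(1,2)] True by blast
      show "\<forall>e\<in>E. e \<in> S \<or> (\<forall>c\<in>set (cs@[x]) \<union> set (ds@[y]). \<not> near G S (2^k) c e)"
        using E_new[OF Ef c0 d0(1,2)] .
      show "\<forall>(a,b)\<in>insert (x,y) R. (a,b) \<in> set (zip (cs@[x]) (ds@[y])) \<or> (b,a) \<in> set (zip (cs@[x]) (ds@[y])) \<or> (a = b \<and> a \<in> E)"
        using R unfolding zipapp by blast
    qed
    thus ?thesis using d0(3) by blast
  next
    case F1: False
    show ?thesis
    proof (cases "x \<notin> S \<and> (\<exists>d\<in>set ds. near G S (2^k) d x)")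
      case True
      then obtain d0 where d0: "d0 \<in> set ds" "near G S (2^k) d0 x" by blast
      have "x \<in> nearset G S (2^k) ds" using True x by (auto simp: nearset_def)
      then obtain y where y: "y \<in> nearset G S (2^k) cs" "LE G S k (cs@[y]) (ds@[x])" using bw by blast
      then obtain c0 where c0: "c0 \<in> set cs" "near G S (2^k) c0 y" "y \<in> verts G" "y \<notin> S" by (auto simp: nearset_def)
      have "Inv G S k (insert (x,y) R)" unfolding Inv_def
      proof (intro exI conjI)
        show "length (cs@[y]) = length (ds@[x])" using l by simp
        show "LE G S k (cs@[y]) (ds@[x])" using y(2) .
        show "set (cs@[y]) \<subseteq> verts G - S" using scs c0 by auto
        show "set (ds@[x]) \<subseteq> verts G - S" using sds x True by auto
        show "E \<subseteq> verts G" using sE .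
        show "\<forall>c\<in>set (cs@[y]). \<forall>d\<in>set (ds@[x]). \<not> near G S (2^(k+2)) c d"
          using sep_new[OF wf sep scs sds c0(4) _ c0(1,2) d0] True by blast
        show "\<forall>e\<in>E. e \<in> S \<or> (\<forall>c\<in>set (cs@[y]) \<union> set (ds@[x]). \<not> near G S (2^k) c e)"
          using E_new[OF Ef c0(1,2) d0] .
        show "\<forall>(a,b)\<in>insert (x,y) R. (a,b) \<in> set (zip (cs@[y]) (ds@[x])) \<or> (b,a) \<in> set (zip (cs@[y]) (ds@[x])) \<or> (a = b \<and> a \<in> E)"
          using R unfolding zipapp by blast
      qed
      thus ?thesis using c0(3) by blast
    next
      case F2: False
      have xfar: "x \<in> S \<or> (\<forall>c\<in>set cs \<union> set ds. \<not> near G S (2^k) c x)" using F1 F2 by blast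
      have "Inv G S k (insert (x,x) R)" unfolding Inv_def
      proof (intro exI conjI)
        show "length cs = length ds" using l .
        show "LE G S k cs ds" using lek .
        show "set cs \<subseteq> verts G - S" using scs .
        show "set ds \<subseteq> verts G - S" using sds .
        show "insert x E \<subseteq> verts G" using sE x by auto
        show "\<forall>c\<in>set cs. \<forall>d\<in>set ds. \<not> near G S (2^(k+2)) c d" using sepk .
        show "\<forall>e\<in>insert x E. e \<in> S \<or> (\<forall>c\<in>set cs \<union> set ds. \<not> near G S (2^k) c e)"
          using xfar Ef near_mono[OF _ pow_arith(4), of G S] by blast
        show "\<forall>(a,b)\<in>insert (x,x) R. (a,b) \<in> set (zip cs ds) \<or> (b,a) \<in> set (zip cs ds) \<or> (a = b \<and> a \<in> insert x E)"
          using R by blast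
      qed
      thus ?thesis using x by blast
    qed
  qed
qed

lemma Inv_swapwin: "wf_lgraph G \<Longrightarrow> Inv G S k R \<Longrightarrow> swapwin G k R"
proof (induction k arbitrary: R)
  case 0 then show ?case using Inv_piso by simp
next
  case (Suc k)
  have "piso G (R \<union> R\<inverse>)" using Inv_piso[OF Suc.prems] .
  moreover have "\<forall>x\<in>verts G. \<exists>y\<in>verts G. swapwin G k (insert (x,y) R)"
    using Inv_step[OF Suc.prems(1,2)] Suc.IH Suc.prems(1) by blast
  ultimately show ?case by simp
qed



theorem theorem6p8:
  fixes C :: "(nat, 'l::finite) lgraph set" and \<psi> :: "'l fo"
  assumes "\<forall>G \<in> C. wf_lgraph G"
    and "uniformly_quasi_wide C"
    and "interp_formula \<psi>"
  shows "\<forall>m::nat. \<exists>p::nat. \<forall>H \<in> interp \<psi> ` C. \<forall>I.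
           dcong_indep H m I \<longrightarrow> card I \<le> p"
proof (intro allI)
  fix m :: nat
  define q where "q = qd \<psi>"
  define K where "K = q + m"
  have fv: "fvars \<psi> \<subseteq> {0,1}" using assms(3) unfolding interp_formula_def by blast
  have ex: "\<exists>N :: nat \<Rightarrow> nat. \<exists>s::nat. \<forall>k::nat. \<forall>G \<in> C. \<forall>A.
        A \<subseteq> verts G \<and> card A \<ge> N k \<longrightarrow>
        (\<exists>S. S \<subseteq> verts G \<and> card S \<le> s \<and>
           (\<exists>B. B \<subseteq> A - S \<and> finite B \<and> card B = k \<and>
              (\<forall>u \<in> B. \<forall>v \<in> B. u \<noteq> v \<longrightarrow> \<not> near G S (2^(K+2)) u v)))"
    using assms(2) unfolding uniformly_quasi_wide_def by (rule spec)
  obtain N :: "nat \<Rightarrow> nat" and s :: nat where U: "\<forall>k::nat. \<forall>G \<in> C. \<forall>A.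
        A \<subseteq> verts G \<and> card A \<ge> N k \<longrightarrow>
        (\<exists>S. S \<subseteq> verts G \<and> card S \<le> s \<and>
           (\<exists>B. B \<subseteq> A - S \<and> finite B \<and> card B = k \<and>
              (\<forall>u \<in> B. \<forall>v \<in> B. u \<noteq> v \<longrightarrow> \<not> near G S (2^(K+2)) u v)))"
    using ex by (elim exE) (rule that, assumption)
  define T where "T = Fb (card (UNIV::'l set)) s K 1"
  show "\<exists>p::nat. \<forall>H \<in> interp \<psi> ` C. \<forall>I. dcong_indep H m I \<longrightarrow> card I \<le> p"
  proof (intro exI ballI allI impI)
    fix H I assume H: "H \<in> interp \<psi> ` C" and ind: "dcong_indep H m I"
    obtain G where G: "G \<in> C" "H = interp \<psi> G" using H by blast
    have wf: "wf_lgraph G" using assms(1) G(1) by blast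
    have fV: "finite (verts G)" using wf unfolding wf_lgraph_def by blast
    have IV: "I \<subseteq> verts G" using ind G(2) unfolding dcong_indep_def interp_def by simp
    show "card I \<le> N (Suc T)"
    proof (rule ccontr)
      assume "\<not> card I \<le> N (Suc T)"
      hence cI: "card I \<ge> N (Suc T)" by simp
      have "\<exists>S. S \<subseteq> verts G \<and> card S \<le> s \<and>
           (\<exists>B. B \<subseteq> I - S \<and> finite B \<and> card B = Suc T \<and>
              (\<forall>u \<in> B. \<forall>v \<in> B. u \<noteq> v \<longrightarrow> \<not> near G S (2^(K+2)) u v))"
        using U G(1) IV cI by simp
      then obtain S B where S: "S \<subseteq> verts G" "card S \<le> s" and B: "B \<subseteq> I - S" "finite B" "card B = Suc T"
        and far: "\<forall>u \<in> B. \<forall>v \<in> B. u \<noteq> v \<longrightarrow> \<not> near G S (2^(K+2)) u v"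
        by (elim exE conjE) (rule that, assumption+)
      have fS: "finite S" using S(1) fV finite_subset by blast
      let ?f = "\<lambda>u. cls G S K [u]"
      have sub: "?f ` B \<subseteq> cls G S K ` Lst G 1"
        using B(1) IV by (auto simp: Lst_def)
      have "card (?f ` B) \<le> card (cls G S K ` Lst G 1)"
        by (rule card_mono[OF _ sub]) (simp add: finite_Lst[OF fV])
      also have "\<dots> \<le> T" unfolding T_def using cls_bound[OF fV fS S(2)] .
      finally have "card (?f ` B) < card B" using B(3) by simp
      hence "\<not> inj_on ?f B" using card_image by fastforce
      then obtain u v where uv: "u \<in> B" "v \<in> B" "u \<noteq> v" "?f u = ?f v"
        unfolding inj_on_def by blast
      have le: "LE G S K [u] [v]" using cls_LE[OF uv(4)] .
      have uS: "u \<in> verts G - S" "v \<in> verts G - S" using uv B(1) IV by auto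
      have "Inv G S K {(u,v)}" unfolding Inv_def
        apply (rule exI[of _ "[u]"], rule exI[of _ "[v]"], rule exI[of _ "{}"])
        using le uS far uv by auto
      hence "swapwin G (q + m) {(u,v)}" using Inv_swapwin[OF wf] K_def by simp
      hence "dgame (interp \<psi> G) m [u] [v]"
        using gameB[OF fv, of q G m "{(u,v)}" "[u]" "[v]"] q_def by simp
      hence "dcong H m u v" using G(2) by (simp add: dcong_def)
      thus False using ind uv unfolding dcong_indep_def using B(1) by blast
    qed
  qed
qed

end
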